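(* Let $k\in\mathbb N$, $0<p,q\le\infty$, $\alpha\in\mathbb R$, $\beta\in J_p$, $\delta>0$, and $0<\varepsilon\le\min\{2k^2\delta^2,1\}$. Then the function $f(x)=\lambda(x-1+\varepsilon)_+^{k-1}$ with $\lambda=\varepsilon^{-k-\beta-1/p+1}$ satisfies $f\in\mathbb M^k$, $\|w_{\alpha,\beta}f\|_p\sim1$, and \[ \omega_\varphi^k(f,\delta)_{w_{\alpha,\beta},q}\ge c\,\varepsilon^{1/q-1/p}, \] with constants independent of $\varepsilon$ and $\delta$.
   Context: For $x\in[-1,1]$, $\varphi(x)=\sqrt{1-x^2}$, $w_{\alpha,\beta}(x)=(1+x)^\alpha(1-x)^\beta$; $\|\cdot\|_p$ is the $L_p[-1,1]$ (quasi)norm, $\|g\|_{L_q(S)}$ over $S$; $J_p=(-1/p,\infty)$ if $p<\infty$, $J_\infty=[0,\infty)$; $u_+=\max\{u,0\}$ (with $u_+^0$ the indicator of $u>0$... i.e. of $u\ge0$ up to a point). $\Delta_h^k(f,x)=\sum_{i=0}^k\binom ki(-1)^{k-i}f(x-kh/2+ih)$ if $x\pm kh/2\in[-1,1]$, else $0$; $\overrightarrow\Delta_h^k(f,x)=\Delta_h^k(f,x+kh/2)$, $\overleftarrow\Delta_h^k(f,x)=\Delta_h^k(f,x-kh/2)$. For a weight $w$: $\Omega_\varphi^k(f,\delta)_{w,q}=\sup_{0<h\le\delta}\|w(x)\Delta^k_{h\varphi(x)}(f,x)\|_{L_q[-1+2k^2h^2,1-2k^2h^2]}$, $\overrightarrow\Omega_\varphi^k(f,\delta)_{w,q}=\sup_{0<h\le2k^2\delta^2}\|w\overrightarrow\Delta_h^k(f,\cdot)\|_{L_q[-1,-1+2k^2\delta^2]}$,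 $\overleftarrow\Omega_\varphi^k(f,\delta)_{w,q}=\sup_{0<h\le2k^2\delta^2}\|w\overleftarrow\Delta_h^k(f,\cdot)\|_{L_q[1-2k^2\delta^2,1]}$, $\omega_\varphi^k=\Omega_\varphi^k+\overrightarrow\Omega_\varphi^k+\overleftarrow\Omega_\varphi^k$. $\mathbb M^k$: functions on $(-1,1)$ with all $k$th divided differences at distinct points nonnegative. $F\sim G$ means two-sided bounds with positive constants independent of $\varepsilon,\delta$. *)

theory Defs
  imports "HOL-Analysis.Analysis" "HOL-Probability.Essential_Supremum"
begin

definition inv_exp :: "ereal \<Rightarrow> real" where
  "inv_exp p = (if p = \<infinity> then 0 else 1 / real_of_ereal p)"

definition Lnorm :: "ereal \<Rightarrow> real set \<Rightarrow> (real \<Rightarrow> real) \<Rightarrow> ereal" where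
  "Lnorm q S g =
     (if q = \<infinity> then max 0 (esssup (lebesgue_on S) (\<lambda>x. ereal \<bar>g x\<bar>))
      else (let I = (\<integral>\<^sup>+ x. ennreal (\<bar>g x\<bar> powr real_of_ereal q) \<partial>(lebesgue_on S))
            in if I = \<infinity> then \<infinity> else ereal (enn2real I powr (1 / real_of_ereal q))))"

definition phi :: "real \<Rightarrow> real" where
  "phi x = sqrt (1 - x\<^sup>2)"

definition wab :: "real \<Rightarrow> real \<Rightarrow> real \<Rightarrow> real" where
  "wab \<alpha> \<beta> x = (1 + x) powr \<alpha> * (1 - x) powr \<beta>"

text \<open>u_+^n; for n = 0 this is the indicator of u > 0.\<close>
definition pos_pow :: "real \<Rightarrow> nat \<Rightarrow> real" where
  "pos_pow u n = (if u > 0 then u ^ n else 0)"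

definition Delta :: "nat \<Rightarrow> real \<Rightarrow> (real \<Rightarrow> real) \<Rightarrow> real \<Rightarrow> real" where
  "Delta k h f x =
     (if x - k * h / 2 \<in> {-1..1} \<and> x + k * h / 2 \<in> {-1..1}
      then (\<Sum>i\<le>k. real (k choose i) * (-1) ^ (k - i) * f (x - k * h / 2 + i * h))
      else 0)"

definition Delta_fwd :: "nat \<Rightarrow> real \<Rightarrow> (real \<Rightarrow> real) \<Rightarrow> real \<Rightarrow> real" where
  "Delta_fwd k h f x = Delta k h f (x + k * h / 2)"

definition Delta_bwd :: "nat \<Rightarrow> real \<Rightarrow> (real \<Rightarrow> real) \<Rightarrow> real \<Rightarrow> real" where
  "Delta_bwd k h f x = Delta k h f (x - k * h / 2)"

definition Omega_main :: "nat \<Rightarrow> (real \<Rightarrow> real) \<Rightarrow> real \<Rightarrow> (real \<Rightarrow> real) \<Rightarrow> ereal \<Rightarrow> ereal" where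
  "Omega_main k f \<delta> w q =
     (SUP h\<in>{0<..\<delta>}. Lnorm q {-1 + 2 * k\<^sup>2 * h\<^sup>2 .. 1 - 2 * k\<^sup>2 * h\<^sup>2}
        (\<lambda>x. w x * Delta k (h * phi x) f x))"

definition Omega_left :: "nat \<Rightarrow> (real \<Rightarrow> real) \<Rightarrow> real \<Rightarrow> (real \<Rightarrow> real) \<Rightarrow> ereal \<Rightarrow> ereal" where
  "Omega_left k f \<delta> w q =
     (SUP h\<in>{0<..2 * k\<^sup>2 * \<delta>\<^sup>2}. Lnorm q {-1 .. -1 + 2 * k\<^sup>2 * \<delta>\<^sup>2}
        (\<lambda>x. w x * Delta_fwd k h f x))"

definition Omega_right :: "nat \<Rightarrow> (real \<Rightarrow> real) \<Rightarrow> real \<Rightarrow> (real \<Rightarrow> real) \<Rightarrow> ereal \<Rightarrow> ereal" where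
  "Omega_right k f \<delta> w q =
     (SUP h\<in>{0<..2 * k\<^sup>2 * \<delta>\<^sup>2}. Lnorm q {1 - 2 * k\<^sup>2 * \<delta>\<^sup>2 .. 1}
        (\<lambda>x. w x * Delta_bwd k h f x))"

definition omega_phi :: "nat \<Rightarrow> (real \<Rightarrow> real) \<Rightarrow> real \<Rightarrow> (real \<Rightarrow> real) \<Rightarrow> ereal \<Rightarrow> ereal" where
  "omega_phi k f \<delta> w q = Omega_main k f \<delta> w q + Omega_left k f \<delta> w q + Omega_right k f \<delta> w q"

text \<open>k-th divided difference of f at the points xs 0, ..., xs k (assumed distinct).\<close>
definition divdiff :: "nat \<Rightarrow> (nat \<Rightarrow> real) \<Rightarrow> (real \<Rightarrow> real) \<Rightarrow> real" where
  "divdiff k xs f = (\<Sum>i\<le>k. f (xs i) / (\<Prod>j\<in>{..k} - {i}. (xs i - xs j)))"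

definition Mk :: "nat \<Rightarrow> (real \<Rightarrow> real) set" where
  "Mk k = {f. \<forall>xs. inj_on xs {..k} \<and> (\<forall>i\<le>k. xs i \<in> {-1<..<1}) \<longrightarrow> divdiff k xs f \<ge> 0}"

definition J :: "ereal \<Rightarrow> real set" where
  "J p = (if p = \<infinity> then {0..} else {- inv_exp p <..})"

end

theory Submission
  imports Defs
begin

definition DD :: "real set \<Rightarrow> (real \<Rightarrow> real) \<Rightarrow> real" where
  "DD S g = (\<Sum>x\<in>S. g x / (\<Prod>y\<in>S-{x}. (x - y)))"

lemma DD_cong: "(\<And>x. x \<in> S \<Longrightarrow> g x = h x) \<Longrightarrow> DD S g = DD S h"
  unfolding DD_def by (auto intro!: sum.cong)

lemma DD_cmult: "DD S (\<lambda>x. a * g x) = a * DD S g"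
  unfolding DD_def by (simp add: sum_distrib_left)

lemma aux_split: "((x::real) - c) * g / P = (u - c) * (g / P) + (x - u) * g / P"
proof -
  have "(u - c) * (g / P) + (x - u) * g / P = ((u - c) * g + (x - u) * g) / P"
    by (simp add: add_divide_distrib)
  also have "(u - c) * g + (x - u) * g = (x - c) * g" by (simp add: algebra_simps)
  finally show ?thesis by simp
qed

lemma DD_leibniz:
  assumes "finite S" "u \<in> S"
  shows "DD S (\<lambda>x. (x - c) * g x) = (u - c) * DD S g + DD (S - {u}) g"
proof -
  have "DD S (\<lambda>x. (x - c) * g x) = (\<Sum>x\<in>S. (u - c) * (g x / (\<Prod>y\<in>S-{x}. (x - y))) + (x - u) * g x / (\<Prod>y\<in>S-{x}. (x - y)))"
    unfolding DD_def
    by (rule sum.cong[OF refl], rule aux_split)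
  also have "\<dots> = (u - c) * DD S g + (\<Sum>x\<in>S. (x - u) * g x / (\<Prod>y\<in>S-{x}. (x - y)))"
    unfolding DD_def by (simp add: sum.distrib sum_distrib_left)
  also have "(\<Sum>x\<in>S. (x - u) * g x / (\<Prod>y\<in>S-{x}. (x - y))) = (\<Sum>x\<in>S-{u}. (x - u) * g x / (\<Prod>y\<in>S-{x}. (x - y)))"
    using assms by (subst sum.remove[of S u]) auto
  also have "\<dots> = DD (S - {u}) g"
    unfolding DD_def
  proof (intro sum.cong refl)
    fix x assume x: "x \<in> S - {u}"
    have "(\<Prod>y\<in>S-{x}. (x - y)) = (x - u) * (\<Prod>y\<in>S-{x}-{u}. (x - y))"
      using assms x by (subst prod.remove[of _ u]) auto
    moreover have "S-{x}-{u} = S-{u}-{x}" by auto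
    ultimately show "(x - u) * g x / (\<Prod>y\<in>S-{x}. (x - y)) = g x / (\<Prod>y\<in>S-{u}-{x}. (x - y))"
      using x by simp
  qed
  finally show ?thesis .
qed

lemma DD_rec:
  assumes "finite S" "u \<in> S" "v \<in> S" "u \<noteq> v"
  shows "DD S g = (DD (S - {u}) g - DD (S - {v}) g) / (v - u)"
proof -
  have 1: "DD S (\<lambda>x. (x - v) * g x) = (u - v) * DD S g + DD (S - {u}) g"
    using DD_leibniz[OF assms(1,2)] .
  have 2: "DD S (\<lambda>x. (x - v) * g x) = DD (S - {v}) g"
    using DD_leibniz[OF assms(1,3), of v g] by simp
  from 1 2 assms(4) show ?thesis by (simp add: field_simps)
qed

lemma card_ge2_obtain:
  assumes "finite S" "card S \<ge> 2"
  obtains u v where "u \<in> S" "v \<in> S" "u < (v::real)"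
proof -
  have "S \<noteq> {}" using assms by auto
  then obtain u where u: "u \<in> S" by blast
  have "card (S - {u}) \<ge> 1" using assms u by (simp add: card_Diff_singleton)
  then have "S - {u} \<noteq> {}" by (metis card.empty not_one_le_zero)
  then obtain v where v: "v \<in> S" "v \<noteq> u" by blast
  show ?thesis
  proof (cases "u < v")
    case True then show ?thesis using that u v by blast
  next
    case False then have "v < u" using v by simp
    then show ?thesis using that u v by blast
  qed
qed

lemma DD_pair: "u \<noteq> v \<Longrightarrow> DD {u, v} g = (g v - g u) / (v - u)"
proof -
  assume uv: "u \<noteq> v"
  have "{u,v} - {v} = {u}" "{u,v} - {u} = {v}" using uv by auto
  then have "DD {u, v} g = g u / (u - v) + g v / (v - u)" using uv by (simp add: DD_def)
  also have "g u / (u - v) = - (g u / (v - u))" by (metis minus_diff_eq minus_divide_right)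
  also have "- (g u / (v - u)) + g v / (v - u) = (g v - g u) / (v - u)" by (simp add: diff_divide_distrib)
  finally show ?thesis .
qed

lemma DD_const: "finite S \<Longrightarrow> card S = n + 2 \<Longrightarrow> DD S (\<lambda>_. c) = 0"
proof (induction n arbitrary: S)
  case 0
  then obtain u v where "S = {u, v}" "u \<noteq> v" by (auto simp: card_Suc_eq numeral_2_eq_2)
  moreover have "{u,v} - {v} = {u}" "{u,v} - {u} = {v}" using \<open>u \<noteq> v\<close> by auto
  ultimately show ?case by (simp add: DD_def field_simps)
next
  case (Suc n)
  have c2: "card S \<ge> 2" using Suc.prems by simp
  obtain u v where uv: "u \<in> S" "v \<in> S" "u < v" using card_ge2_obtain[OF Suc.prems(1) c2] by blast
  have cu: "card (S - {u}) = n + 2" and cv: "card (S - {v}) = n + 2"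
    using Suc.prems uv by (simp_all add: card_Diff_singleton)
  have "DD (S - {u}) (\<lambda>_. c) = 0" by (rule Suc.IH) (use Suc.prems cu in simp_all)
  moreover have "DD (S - {v}) (\<lambda>_. c) = 0" by (rule Suc.IH) (use Suc.prems cv in simp_all)
  ultimately
  show ?case using DD_rec[OF Suc.prems(1) uv(1,2)] uv(3) by simp
qed

lemma DD_poly: "finite S \<Longrightarrow> card S \<ge> n + 2 \<Longrightarrow> DD S (\<lambda>x. (x - c) ^ n) = 0"
proof (induction n arbitrary: S)
  case 0
  have "card S = (card S - 2) + 2" using 0 by simp
  then show ?case using DD_const[of S "card S - 2" 1] 0 by simp
next
  case (Suc n)
  then obtain u where u: "u \<in> S" by fastforce
  have "DD S (\<lambda>x. (x - c) ^ Suc n) = DD S (\<lambda>x. (x - c) * (x - c) ^ n)" by simp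
  also have "\<dots> = (u - c) * DD S (\<lambda>x. (x - c) ^ n) + DD (S - {u}) (\<lambda>x. (x - c) ^ n)"
    using DD_leibniz[OF Suc.prems(1) u] .
  also have "\<dots> = 0"
  proof -
    have c1: "card (S - {u}) \<ge> n + 2" using Suc.prems u by (simp add: card_Diff_singleton)
    have "DD S (\<lambda>x. (x - c) ^ n) = 0" by (rule Suc.IH) (use Suc.prems in simp_all)
    moreover have "DD (S - {u}) (\<lambda>x. (x - c) ^ n) = 0" by (rule Suc.IH) (use Suc.prems c1 in simp_all)
    ultimately show ?thesis by simp
  qed
  finally show ?case .
qed

lemma DD_pos_pow: "finite S \<Longrightarrow> card S = n + 2 \<Longrightarrow> DD S (\<lambda>x. pos_pow (x - c) n) \<ge> 0"
proof (induction n arbitrary: S c)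
  case 0
  then obtain u v where S: "S = {u, v}" "u \<noteq> v" by (auto simp: card_Suc_eq numeral_2_eq_2)
  have "DD S (\<lambda>x. pos_pow (x - c) 0) = (pos_pow (v - c) 0 - pos_pow (u - c) 0) / (v - u)"
    using S by (simp add: DD_pair)
  also have "\<dots> \<ge> 0"
  proof (cases "u < v")
    case True
    then have "pos_pow (u - c) 0 \<le> pos_pow (v - c) 0" by (simp add: pos_pow_def)
    then show ?thesis using True by (intro divide_nonneg_pos) auto
  next
    case False
    then have "v < u" using S by simp
    then have "pos_pow (v - c) 0 \<le> pos_pow (u - c) 0" by (simp add: pos_pow_def)
    then show ?thesis using \<open>v < u\<close> by (intro divide_nonpos_neg) auto
  qed
  finally show ?case .
next
  case (Suc n)
  define u where "u = Min S"
  define v where "v = Max S"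
  have c2: "card S \<ge> 2" using Suc.prems by simp
  obtain u' v' where uv': "u' \<in> S" "v' \<in> S" "u' < v'" using card_ge2_obtain[OF Suc.prems(1) c2] by blast
  have ne: "S \<noteq> {}" using uv' by auto
  have uS: "u \<in> S" and vS: "v \<in> S" unfolding u_def v_def using Suc.prems(1) ne by (rule Min_in, rule Max_in)
  have ux: "\<And>x. x \<in> S \<Longrightarrow> u \<le> x" and xv: "\<And>x. x \<in> S \<Longrightarrow> x \<le> v"
    unfolding u_def v_def using Suc.prems(1) by simp_all
  have uv: "u < v" using ux[OF uv'(1)] xv[OF uv'(2)] uv'(3) by simp
  show ?case
  proof (cases "c < u")
    case True
    have "DD S (\<lambda>x. pos_pow (x - c) (Suc n)) = DD S (\<lambda>x. (x - c) ^ Suc n)"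
    proof (rule DD_cong)
      fix x assume "x \<in> S" then have "x - c > 0" using True ux[of x] by simp
      then show "pos_pow (x - c) (Suc n) = (x - c) ^ Suc n" by (simp add: pos_pow_def)
    qed
    also have "\<dots> = 0" using Suc.prems by (intro DD_poly) simp_all
    finally show ?thesis by simp
  next
    case False
    show ?thesis
    proof (cases "v \<le> c")
      case True
      have "DD S (\<lambda>x. pos_pow (x - c) (Suc n)) = DD S (\<lambda>x. 0)"
      proof (rule DD_cong)
        fix x assume "x \<in> S" then have "\<not> x - c > 0" using True xv[of x] by simp
        then show "pos_pow (x - c) (Suc n) = 0" by (simp add: pos_pow_def)
      qed
      then show ?thesis by (simp add: DD_def)
    next
      case False2: False
      let ?g = "\<lambda>x. pos_pow (x - c) n"
      have cu: "card (S - {u}) = n + 2" and cv: "card (S - {v}) = n + 2"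
        using Suc.prems uS vS by (simp_all add: card_Diff_singleton)
      have A: "DD (S - {u}) ?g \<ge> 0" by (rule Suc.IH) (use Suc.prems cu in simp_all)
      have B: "DD (S - {v}) ?g \<ge> 0" by (rule Suc.IH) (use Suc.prems cv in simp_all)
      have "DD S (\<lambda>x. pos_pow (x - c) (Suc n)) = DD S (\<lambda>x. (x - c) * ?g x)"
        by (intro DD_cong) (auto simp: pos_pow_def)
      also have "\<dots> = (u - c) * DD S ?g + DD (S - {u}) ?g"
        using DD_leibniz[OF Suc.prems(1) uS] .
      also have "\<dots> = (u - c) * ((DD (S - {u}) ?g - DD (S - {v}) ?g) / (v - u)) + DD (S - {u}) ?g"
        using DD_rec[OF Suc.prems(1) uS vS] uv by simp
      also have "\<dots> = ((v - c) * DD (S - {u}) ?g + (c - u) * DD (S - {v}) ?g) / (v - u)"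
        using uv by (simp add: field_simps)
      also have "\<dots> \<ge> 0"
      proof -
        have h1: "v - c \<ge> 0" "c - u \<ge> 0" "v - u > 0" using False False2 uv by auto
        have "(v - c) * DD (S - {u}) ?g \<ge> 0" using h1 A by simp
        moreover have "(c - u) * DD (S - {v}) ?g \<ge> 0" using h1 B by simp
        ultimately show ?thesis using h1 by simp
      qed
      finally show ?thesis .
    qed
  qed
qed

lemma divdiff_DD:
  fixes xs :: "nat \<Rightarrow> real"
  assumes "inj_on xs {..k}"
  shows "divdiff k xs f = DD (xs ` {..k}) f"
proof -
  have "DD (xs ` {..k}) f = (\<Sum>i\<le>k. f (xs i) / (\<Prod>y\<in>xs ` {..k} - {xs i}. (xs i - y)))"
    unfolding DD_def sum.reindex[OF assms] o_def by (rule refl)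
  also have "\<dots> = divdiff k xs f"
    unfolding divdiff_def
  proof (intro sum.cong refl)
    fix i assume i: "i \<in> {..k}"
    have "xs ` {..k} - {xs i} = xs ` ({..k} - {i})"
      using inj_on_image_set_diff[OF assms, of "{..k}" "{i}"] i by simp
    moreover have ij: "inj_on xs ({..k} - {i})" using assms by (rule inj_on_subset) auto
    ultimately show "f (xs i) / (\<Prod>y\<in>xs ` {..k} - {xs i}. (xs i - y)) = f (xs i) / (\<Prod>j\<in>{..k} - {i}. (xs i - xs j))"
      by (simp only: prod.reindex[OF ij] o_def)
  qed
  finally show ?thesis by (rule sym)
qed

lemma in_Mk:
  assumes "k \<ge> 1" "lam \<ge> 0"
  shows "(\<lambda>x. lam * pos_pow (x - c) (k - 1)) \<in> Mk k"
  unfolding Mk_def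
proof (safe)
  fix xs :: "nat \<Rightarrow> real" assume inj: "inj_on xs {..k}"
  have "card (xs ` {..k}) = (k - 1) + 2" using inj assms by (simp add: card_image)
  then have "DD (xs ` {..k}) (\<lambda>x. pos_pow (x - c) (k - 1)) \<ge> 0" by (intro DD_pos_pow) auto
  then show "0 \<le> divdiff k xs (\<lambda>x. lam * pos_pow (x - c) (k - 1))"
    using assms by (simp add: divdiff_DD[OF inj] DD_cmult)
qed

lemma lebesgue_on_Icc_basics:
  fixes a b u v :: real
  assumes "u \<le> v" "{u..v} \<subseteq> {a..b}"
  shows "emeasure (lebesgue_on {a..b}) {u..v} = ennreal (v - u)"
    and "{u..v} \<in> sets (lebesgue_on {a..b})"
    and "space (lebesgue_on {a..b}) = {a..b}"
proof -
  show "emeasure (lebesgue_on {a..b}) {u..v} = ennreal (v - u)"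
    using assms by (subst emeasure_restrict_space) auto
  show "{u..v} \<in> sets (lebesgue_on {a..b})"
    using assms by (subst sets_restrict_space_iff) auto
  show "space (lebesgue_on {a..b}) = {a..b}" by simp
qed

lemma Lnorm_nonneg: "Lnorm q S g \<ge> 0"
  unfolding Lnorm_def Let_def by auto

lemma Lnorm_lower:
  fixes a b u v L :: real and g :: "real \<Rightarrow> real"
  assumes q: "0 < q" and uv: "u < v" "{u..v} \<subseteq> {a..b}" and L: "0 \<le> L"
    and bnd: "\<And>x. x \<in> {u..v} \<Longrightarrow> L \<le> \<bar>g x\<bar>"
  shows "ereal (L * (v - u) powr inv_exp q) \<le> Lnorm q {a..b} g"
proof (cases "q = \<infinity>")
  case True
  let ?M = "lebesgue_on {a..b}"
  have meas: "emeasure ?M {u..v} = ennreal (v - u)" "{u..v} \<in> sets ?M" "space ?M = {a..b}"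
    using lebesgue_on_Icc_basics[of u v a b] uv by auto
  have "ereal L \<le> esssup ?M (\<lambda>x. ereal \<bar>g x\<bar>)"
  proof (rule ccontr)
    assume "\<not> ?thesis"
    then have lt: "esssup ?M (\<lambda>x. ereal \<bar>g x\<bar>) < ereal L" by simp
    have "AE x in ?M. ereal \<bar>g x\<bar> \<le> esssup ?M (\<lambda>x. ereal \<bar>g x\<bar>)" by (rule esssup_AE)
    then have "AE x in ?M. x \<notin> {u..v}"
    proof (rule eventually_mono)
      fix x assume "ereal \<bar>g x\<bar> \<le> esssup ?M (\<lambda>x. ereal \<bar>g x\<bar>)"
      then have "ereal \<bar>g x\<bar> < ereal L" using lt by (rule le_less_trans)
      then show "x \<notin> {u..v}" using bnd[of x] by auto
    qed
    then obtain N where N: "{x \<in> space ?M. \<not> x \<notin> {u..v}} \<subseteq> N" "emeasure ?M N = 0" "N \<in> sets ?M"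
      by (rule AE_E)
    have "{u..v} \<subseteq> N" using N(1) meas(3) uv by auto
    then have "emeasure ?M {u..v} \<le> emeasure ?M N" using N(3) by (rule emeasure_mono)
    then show False using N(2) meas(1) uv by simp
  qed
  moreover have "(v - u) powr 0 = 1" using uv by simp
  ultimately show ?thesis using True by (simp add: Lnorm_def inv_exp_def max.coboundedI2)
next
  case False
  let ?M = "lebesgue_on {a..b}"
  have meas: "emeasure ?M {u..v} = ennreal (v - u)" "{u..v} \<in> sets ?M" "space ?M = {a..b}"
    using lebesgue_on_Icc_basics[of u v a b] uv by auto
  define r where "r = real_of_ereal q"
  have r: "r > 0" "q = ereal r" using q False unfolding r_def by (cases q; auto)+
  define I where "I = (\<integral>\<^sup>+ x. ennreal (\<bar>g x\<bar> powr r) \<partial>?M)"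
  have "(\<integral>\<^sup>+ x. ennreal (L powr r) * indicator {u..v} x \<partial>?M) \<le> I"
    unfolding I_def
  proof (rule nn_integral_mono)
    fix x show "ennreal (L powr r) * indicator {u..v} x \<le> ennreal (\<bar>g x\<bar> powr r)"
      using bnd[of x] L r by (auto simp: indicator_def intro!: ennreal_leI powr_mono2)
  qed
  also have "(\<integral>\<^sup>+ x. ennreal (L powr r) * indicator {u..v} x \<partial>?M) = ennreal (L powr r * (v - u))"
    using meas uv by (simp add: nn_integral_cmult_indicator ennreal_mult)
  finally have I: "ennreal (L powr r * (v - u)) \<le> I" .
  show ?thesis
  proof (cases "I = \<infinity>")
    case True
    then show ?thesis using r unfolding Lnorm_def I_def by (simp add: Let_def)
  next
    case fin: False
    have "L powr r * (v - u) \<le> enn2real I"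
      using enn2real_mono[OF I] fin L uv by (simp add: less_top)
    then have "(L powr r * (v - u)) powr (1 / r) \<le> enn2real I powr (1 / r)"
      using L uv r by (intro powr_mono2) auto
    moreover have "(L powr r * (v - u)) powr (1 / r) = L * (v - u) powr (1 / r)"
      using L uv r by (simp add: powr_mult powr_powr)
    ultimately show ?thesis using r fin unfolding Lnorm_def I_def
      by (simp add: Let_def inv_exp_def)
  qed
qed

lemma powr_integral_right:
  fixes e s K :: real
  assumes e: "0 < e" and s: "s > -1" and K: "K \<ge> 0"
  shows "((\<lambda>x. K * (1 - x) powr s) has_integral (K * e powr (s + 1) / (s + 1))) {1 - e..1}"
proof -
  define \<Phi> where "\<Phi> x = (- K / (s + 1)) * (1 - x) powr (s + 1)" for x :: real
  have cont: "continuous_on {1 - e..1} \<Phi>"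
    unfolding \<Phi>_def using s by (intro continuous_intros continuous_on_powr') auto
  have der: "(\<Phi> has_vector_derivative K * (1 - x) powr s) (at x)" if x: "x \<in> {1 - e<..<1}" for x
  proof -
    have "((\<lambda>x. (1 - x) powr (s + 1)) has_real_derivative (s + 1) * (1 - x) powr s * (-1)) (at x)"
      using x by (auto intro!: derivative_eq_intros)
    then have "(\<Phi> has_real_derivative - K / (s + 1) * ((s + 1) * (1 - x) powr s * (-1))) (at x)"
      unfolding \<Phi>_def by (rule DERIV_cmult)
    moreover have "- K / (s + 1) * ((s + 1) * (1 - x) powr s * (-1)) = K * (1 - x) powr s"
      using s by (simp add: field_simps)
    ultimately show ?thesis by (simp add: has_real_derivative_iff_has_vector_derivative)
  qed
  have "((\<lambda>x. K * (1 - x) powr s) has_integral (\<Phi> 1 - \<Phi> (1 - e))) {1 - e..1}"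
    using e cont der by (intro fundamental_theorem_of_calculus_interior) auto
  moreover have "\<Phi> 1 - \<Phi> (1 - e) = K * e powr (s + 1) / (s + 1)"
    unfolding \<Phi>_def using s by (simp add: field_simps)
  ultimately show ?thesis by simp
qed

lemma nn_powr_integral_right:
  fixes e s K :: real
  assumes e: "0 < e" and s: "s > -1" and K: "K \<ge> 0"
  shows "(\<integral>\<^sup>+ x. ennreal (K * (1 - x) powr s) * indicator {1 - e..1} x \<partial>lebesgue) = ennreal (K * e powr (s + 1) / (s + 1))"
  unfolding nn_integral_completion
  by (rule nn_integral_has_integral_lebesgue'[OF _ powr_integral_right[OF assms]]) (use K in simp)

lemma wab_lower:
  fixes x :: real
  assumes "0 \<le> x" "x \<le> 1"
  shows "(1 + x) powr \<alpha> \<ge> min 1 (2 powr \<alpha>)"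
proof (cases "\<alpha> \<ge> 0")
  case True
  then have "1 powr \<alpha> \<le> (1 + x) powr \<alpha>" using assms by (intro powr_mono2) auto
  then show ?thesis by simp
next
  case False
  then have "2 powr \<alpha> \<le> (1 + x) powr \<alpha>" using assms by (intro powr_mono2') auto
  then show ?thesis by simp
qed

lemma wab_upper:
  fixes x :: real
  assumes "0 \<le> x" "x \<le> 1"
  shows "(1 + x) powr \<alpha> \<le> max 1 (2 powr \<alpha>)"
proof (cases "\<alpha> \<ge> 0")
  case True
  then have "(1 + x) powr \<alpha> \<le> 2 powr \<alpha>" using assms by (intro powr_mono2) auto
  then show ?thesis by simp
next
  case False
  then have "(1 + x) powr \<alpha> \<le> 1 powr \<alpha>" using assms by (intro powr_mono2') auto
  then show ?thesis by simp
qed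

lemma pointwise_lower:
  fixes x \<epsilon> t1 t3 ip \<alpha> \<beta> :: real and k :: nat
  assumes k: "k \<ge> 1" and e: "0 < \<epsilon>" "\<epsilon> \<le> 1" and t: "0 < t1" "0 < t3"
    and x: "\<epsilon> * t1 \<le> 1 - x" "1 - x \<le> \<epsilon>" "\<epsilon> * t3 \<le> x - 1 + \<epsilon>"
  shows "min 1 (2 powr \<alpha>) * min (t1 powr \<beta>) 1 * t3 ^ (k - 1) * \<epsilon> powr (- ip)
     \<le> \<bar>wab \<alpha> \<beta> x * (\<epsilon> powr (- real k - \<beta> - ip + 1) * pos_pow (x - 1 + \<epsilon>) (k - 1))\<bar>"
proof -
  have xa: "x - 1 + \<epsilon> > 0" using x e t by (smt (verit) mult_pos_pos)
  have x01: "0 \<le> x" "x \<le> 1" using x e t xa by (auto, smt (verit) mult_pos_pos)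
  have A: "(1 + x) powr \<alpha> \<ge> min 1 (2 powr \<alpha>)" using wab_lower x01 by blast
  have B: "(1 - x) powr \<beta> \<ge> \<epsilon> powr \<beta> * min (t1 powr \<beta>) 1"
  proof (cases "\<beta> \<ge> 0")
    case True
    have "(\<epsilon> * t1) powr \<beta> \<le> (1 - x) powr \<beta>" using True x e t by (intro powr_mono2) auto
    then have "\<epsilon> powr \<beta> * t1 powr \<beta> \<le> (1 - x) powr \<beta>" by (simp add: powr_mult)
    moreover have "\<epsilon> powr \<beta> * min (t1 powr \<beta>) 1 \<le> \<epsilon> powr \<beta> * t1 powr \<beta>"
      by (intro mult_left_mono) auto
    ultimately show ?thesis by linarith
  next
    case False
    have "\<epsilon> powr \<beta> \<le> (1 - x) powr \<beta>" using False x e t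
      by (intro powr_mono2') (auto, smt (verit) mult_pos_pos)
    moreover have "\<epsilon> powr \<beta> * min (t1 powr \<beta>) 1 \<le> \<epsilon> powr \<beta> * 1"
      by (intro mult_left_mono) auto
    ultimately show ?thesis by linarith
  qed
  have C: "(x - 1 + \<epsilon>) ^ (k - 1) \<ge> \<epsilon> ^ (k - 1) * t3 ^ (k - 1)"
    using x e t by (simp add: power_mult_distrib[symmetric] power_mono)
  have pp: "pos_pow (x - 1 + \<epsilon>) (k - 1) = (x - 1 + \<epsilon>) ^ (k - 1)" using xa by (simp add: pos_pow_def)
  define lam where "lam = \<epsilon> powr (- real k - \<beta> - ip + 1)"
  have lam: "lam > 0" unfolding lam_def using e by simp
  have ek: "\<epsilon> ^ (k - 1) = \<epsilon> powr (real k - 1)" using e k by (simp add: powr_realpow[symmetric] of_nat_diff)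
  have key: "lam * \<epsilon> powr \<beta> * \<epsilon> ^ (k - 1) = \<epsilon> powr (- ip)"
    unfolding lam_def ek using e by (simp add: powr_add[symmetric])
  have "min 1 (2 powr \<alpha>) * min (t1 powr \<beta>) 1 * t3 ^ (k - 1) * \<epsilon> powr (- ip)
      = lam * (min 1 (2 powr \<alpha>) * (\<epsilon> powr \<beta> * min (t1 powr \<beta>) 1) * (\<epsilon> ^ (k - 1) * t3 ^ (k - 1)))"
    unfolding key[symmetric] by (simp add: algebra_simps)
  also have "\<dots> \<le> lam * ((1 + x) powr \<alpha> * (1 - x) powr \<beta> * (x - 1 + \<epsilon>) ^ (k - 1))"
    using A B C lam t e by (intro mult_left_mono mult_mono) auto
  also have "\<dots> = \<bar>wab \<alpha> \<beta> x * (lam * pos_pow (x - 1 + \<epsilon>) (k - 1))\<bar>"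
    using lam xa unfolding pp wab_def by (simp add: abs_mult)
  finally show ?thesis unfolding lam_def .
qed

lemma pointwise_upper:
  fixes x \<epsilon> ip \<alpha> \<beta> :: real and k :: nat
  assumes k: "k \<ge> 1" and e: "0 < \<epsilon>" "\<epsilon> \<le> 1" and x: "x \<le> 1"
  shows "\<bar>wab \<alpha> \<beta> x * (\<epsilon> powr (- real k - \<beta> - ip + 1) * pos_pow (x - 1 + \<epsilon>) (k - 1))\<bar>
     \<le> (if x > 1 - \<epsilon> then max 1 (2 powr \<alpha>) * \<epsilon> powr (1 - real k - \<beta> - ip) * \<epsilon> ^ (k - 1) * (1 - x) powr \<beta> else 0)"
proof (cases "x > 1 - \<epsilon>")
  case False
  then show ?thesis by (simp add: pos_pow_def)
next
  case True
  have xa: "x - 1 + \<epsilon> > 0" using True by simp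
  have x01: "0 \<le> x" "x \<le> 1" using True e x by auto
  have A: "(1 + x) powr \<alpha> \<le> max 1 (2 powr \<alpha>)" using wab_upper x01 by blast
  have C: "(x - 1 + \<epsilon>) ^ (k - 1) \<le> \<epsilon> ^ (k - 1)" using xa x by (intro power_mono) auto
  define lam where "lam = \<epsilon> powr (- real k - \<beta> - ip + 1)"
  have lam: "lam > 0" unfolding lam_def using e by simp
  have "\<bar>wab \<alpha> \<beta> x * (lam * pos_pow (x - 1 + \<epsilon>) (k - 1))\<bar>
      = lam * ((1 + x) powr \<alpha> * (1 - x) powr \<beta> * (x - 1 + \<epsilon>) ^ (k - 1))"
    using lam xa unfolding wab_def by (simp add: abs_mult pos_pow_def)
  also have "\<dots> \<le> lam * (max 1 (2 powr \<alpha>) * (1 - x) powr \<beta> * \<epsilon> ^ (k - 1))"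
    using A C lam xa by (intro mult_left_mono mult_mono) auto
  also have "\<dots> = max 1 (2 powr \<alpha>) * \<epsilon> powr (1 - real k - \<beta> - ip) * \<epsilon> ^ (k - 1) * (1 - x) powr \<beta>"
    unfolding lam_def by (simp add: algebra_simps)
  finally show ?thesis using True unfolding lam_def by simp
qed

lemma Delta_bwd_eq:
  fixes h x a :: real and F :: "real \<Rightarrow> real" and k :: nat
  assumes k: "k \<ge> 1" and h: "h > 0" and x: "a < x" "x \<le> a + h" "x - k * h \<ge> -1" "x \<le> 1"
    and F0: "\<And>y. y \<le> a \<Longrightarrow> F y = 0"
  shows "Delta_bwd k h F x = F x"
proof -
  have kh: "k * h \<ge> 0" using h by simp
  have e1: "x - k * h / 2 - k * h / 2 = x - k * h" and e2: "x - k * h / 2 + k * h / 2 = x" by simp_all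
  have cond: "x - k * h / 2 - k * h / 2 \<in> {-1..1} \<and> x - k * h / 2 + k * h / 2 \<in> {-1..1}"
    unfolding e1 e2 atLeastAtMost_iff using x kh by linarith
  have "Delta_bwd k h F x = (\<Sum>i\<le>k. real (k choose i) * (-1) ^ (k - i) * F (x - k * h / 2 - k * h / 2 + i * h))"
    unfolding Delta_bwd_def Delta_def using cond by simp
  also have "\<dots> = (\<Sum>i<k. real (k choose i) * (-1) ^ (k - i) * F (x - k * h / 2 - k * h / 2 + i * h))
       + real (k choose k) * (-1) ^ (k - k) * F (x - k * h / 2 - k * h / 2 + k * h)"
    by (simp add: lessThan_Suc_atMost[symmetric])
  also have "(\<Sum>i<k. real (k choose i) * (-1) ^ (k - i) * F (x - k * h / 2 - k * h / 2 + i * h)) = 0"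
  proof (intro sum.neutral ballI)
    fix i assume "i \<in> {..<k}"
    then have "real i + 1 \<le> real k" by simp
    then have "real i * h + h \<le> real k * h" using h by (metis distrib_right mult_1 mult_right_mono less_le)
    then have "x - k * h / 2 - k * h / 2 + i * h \<le> a" using x by (simp add: field_simps)
    then show "real (k choose i) * (-1) ^ (k - i) * F (x - k * h / 2 - k * h / 2 + i * h) = 0"
      by (simp add: F0)
  qed
  finally show ?thesis by simp
qed

lemma Lnorm_upper_fin:
  fixes B :: real
  assumes "q \<noteq> \<infinity>" "0 < q" "0 \<le> B"
    and I: "(\<integral>\<^sup>+ x. ennreal (\<bar>g x\<bar> powr real_of_ereal q) \<partial>lebesgue_on S) \<le> ennreal B"
  shows "Lnorm q S g \<le> ereal (B powr (1 / real_of_ereal q))"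
proof -
  define r where "r = real_of_ereal q"
  have r: "r > 0" "q = ereal r" using assms unfolding r_def by (cases q; auto)+
  define J where "J = (\<integral>\<^sup>+ x. ennreal (\<bar>g x\<bar> powr r) \<partial>lebesgue_on S)"
  have JB: "J \<le> ennreal B" using I unfolding J_def r_def .
  have "J < top" using le_less_trans[OF JB] by simp
  then have Jfin: "J \<noteq> \<infinity>" by simp
  have "enn2real J \<le> B" using enn2real_mono[OF JB] assms(3) by simp
  then have "enn2real J powr (1 / r) \<le> B powr (1 / r)" using r by (intro powr_mono2) auto
  then show ?thesis using Jfin r(1) unfolding Lnorm_def J_def by (simp add: Let_def r(2))
qed

lemma Lnorm_upper_inf:
  fixes B :: real
  assumes "g \<in> borel_measurable (lebesgue_on S)" "0 \<le> B" "\<And>x. x \<in> S \<Longrightarrow> \<bar>g x\<bar> \<le> B"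
  shows "Lnorm \<infinity> S g \<le> ereal B"
proof -
  have "esssup (lebesgue_on S) (\<lambda>x. ereal \<bar>g x\<bar>) \<le> ereal B"
  proof (rule esssup_I)
    show "(\<lambda>x. ereal \<bar>g x\<bar>) \<in> borel_measurable (lebesgue_on S)" using assms(1) by (intro borel_measurable_ereal borel_measurable_abs)
    show "AE x in lebesgue_on S. ereal \<bar>g x\<bar> \<le> ereal B"
      using assms(3) by (intro AE_I2) auto
  qed
  then show ?thesis using assms(2) by (simp add: Lnorm_def)
qed

theorem lemma6p4:
  fixes k :: nat and p q :: ereal and \<alpha> \<beta> :: real
  assumes "k \<ge> 1" and "0 < p" and "0 < q" and "\<beta> \<in> J p"
  shows "\<exists>c>0. \<exists>C1>0. \<exists>C2>0. \<forall>(\<delta>::real) (\<epsilon>::real).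
           0 < \<delta> \<and> 0 < \<epsilon> \<and> \<epsilon> \<le> min (2 * (real k)\<^sup>2 * \<delta>\<^sup>2) 1 \<longrightarrow>
           (let lam = \<epsilon> powr (- real k - \<beta> - inv_exp p + 1);
                f = (\<lambda>x. lam * pos_pow (x - 1 + \<epsilon>) (k - 1))
            in f \<in> Mk k
               \<and> ereal C1 \<le> Lnorm p {-1..1} (\<lambda>x. wab \<alpha> \<beta> x * f x)
               \<and> Lnorm p {-1..1} (\<lambda>x. wab \<alpha> \<beta> x * f x) \<le> ereal C2
               \<and> omega_phi k f \<delta> (wab \<alpha> \<beta>) q \<ge> ereal (c * \<epsilon> powr (inv_exp q - inv_exp p)))"
proof -
  have k: "k \<ge> 1" using assms by simp
  have kpos: "real k > 0" using k by simp
  define r where "r = real_of_ereal p"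
  define mA where "mA = min 1 (2 powr \<alpha>)"
  define MA where "MA = max 1 (2 powr \<alpha>)"
  define c' where "c' = mA * min ((1/2) powr \<beta>) 1 * (1 / (4 * real k)) ^ (k - 1)"
  define c where "c = c' * (1 / (4 * real k)) powr inv_exp q"
  define C1' where "C1' = mA * min ((1/4) powr \<beta>) 1 * (1/2) ^ (k - 1)"
  define C1 where "C1 = C1' * (1/4) powr inv_exp p"
  define C2 where "C2 = (if p = \<infinity> then MA else (MA powr r / (\<beta> * r + 1)) powr (1 / r))"
  have mA: "mA > 0" unfolding mA_def by simp
  have MA: "MA \<ge> 1" unfolding MA_def by simp
  have c': "c' > 0" unfolding c'_def using mA kpos by simp
  have cpos: "c > 0" unfolding c_def using c' kpos by simp
  have C1': "C1' > 0" unfolding C1'_def using mA by simp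
  have C1pos: "C1 > 0" unfolding C1_def using C1' by simp
  have pfin: "p \<noteq> \<infinity> \<Longrightarrow> r > 0 \<and> p = ereal r \<and> inv_exp p = 1 / r \<and> \<beta> * r > -1"
  proof -
    assume pf: "p \<noteq> \<infinity>"
    have r: "r > 0" "p = ereal r" using assms(2) pf unfolding r_def by (cases p; auto)+
    have "\<beta> > - (1 / r)" using assms(4) pf r unfolding J_def inv_exp_def by simp
    then have "\<beta> * r > - (1 / r) * r" using r by (intro mult_strict_right_mono) auto
    then have "\<beta> * r > -1" using r by simp
    then show ?thesis using r pf unfolding inv_exp_def by simp
  qed
  have C2pos: "C2 > 0"
  proof (cases "p = \<infinity>")
    case True then show ?thesis unfolding C2_def using MA by simp
  next
    case False then show ?thesis unfolding C2_def using MA pfin[OF False] by simp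
  qed
  have main: "\<forall>(\<delta>::real) (\<epsilon>::real).
           0 < \<delta> \<and> 0 < \<epsilon> \<and> \<epsilon> \<le> min (2 * (real k)\<^sup>2 * \<delta>\<^sup>2) 1 \<longrightarrow>
           (let lam = \<epsilon> powr (- real k - \<beta> - inv_exp p + 1);
                f = (\<lambda>x. lam * pos_pow (x - 1 + \<epsilon>) (k - 1))
            in f \<in> Mk k
               \<and> ereal C1 \<le> Lnorm p {-1..1} (\<lambda>x. wab \<alpha> \<beta> x * f x)
               \<and> Lnorm p {-1..1} (\<lambda>x. wab \<alpha> \<beta> x * f x) \<le> ereal C2
               \<and> omega_phi k f \<delta> (wab \<alpha> \<beta>) q \<ge> ereal (c * \<epsilon> powr (inv_exp q - inv_exp p)))"
  proof (intro allI impI)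
    fix \<delta> \<epsilon> :: real
    assume H: "0 < \<delta> \<and> 0 < \<epsilon> \<and> \<epsilon> \<le> min (2 * (real k)\<^sup>2 * \<delta>\<^sup>2) 1"
    have d: "0 < \<delta>" and e: "0 < \<epsilon>" "\<epsilon> \<le> 1" and ed: "\<epsilon> \<le> 2 * (real k)\<^sup>2 * \<delta>\<^sup>2" using H by auto
    define lam where "lam = \<epsilon> powr (- real k - \<beta> - inv_exp p + 1)"
    define f where "f = (\<lambda>x. lam * pos_pow (x - 1 + \<epsilon>) (k - 1))"
    define g where "g = (\<lambda>x. wab \<alpha> \<beta> x * f x)"
    have lam: "lam > 0" unfolding lam_def using e by simp
    have fMk: "f \<in> Mk k"
    proof -
      have "f = (\<lambda>x. lam * pos_pow (x - (1 - \<epsilon>)) (k - 1))" unfolding f_def by (simp add: algebra_simps)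
      then show ?thesis using in_Mk[OF k, of lam "1 - \<epsilon>"] lam by simp
    qed
    have low: "ereal C1 \<le> Lnorm p {-1..1} g"
    proof -
      let ?L = "C1' * \<epsilon> powr (- inv_exp p)"
      have bnd: "?L \<le> \<bar>g x\<bar>" if x: "x \<in> {1 - \<epsilon>/2 .. 1 - \<epsilon>/4}" for x
      proof -
        have "min 1 (2 powr \<alpha>) * min ((1/4) powr \<beta>) 1 * (1/2) ^ (k - 1) * \<epsilon> powr (- inv_exp p)
           \<le> \<bar>wab \<alpha> \<beta> x * (\<epsilon> powr (- real k - \<beta> - inv_exp p + 1) * pos_pow (x - 1 + \<epsilon>) (k - 1))\<bar>"
          using x e by (intro pointwise_lower[OF k]) auto
        then show ?thesis unfolding g_def f_def lam_def C1'_def mA_def by simp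
      qed
      have "ereal (?L * ((1 - \<epsilon>/4) - (1 - \<epsilon>/2)) powr inv_exp p) \<le> Lnorm p {-1..1} g"
        using e C1' by (intro Lnorm_lower[OF assms(2)] bnd) auto
      moreover have "?L * ((1 - \<epsilon>/4) - (1 - \<epsilon>/2)) powr inv_exp p = C1"
      proof -
        have "(1 - \<epsilon>/4) - (1 - \<epsilon>/2) = \<epsilon> * (1/4)" by simp
        then have pe: "((1 - \<epsilon>/4) - (1 - \<epsilon>/2)) powr inv_exp p = \<epsilon> powr inv_exp p * (1/4) powr inv_exp p"
          by (simp only: powr_mult)
        have "?L * ((1 - \<epsilon>/4) - (1 - \<epsilon>/2)) powr inv_exp p
            = C1' * (1/4) powr inv_exp p * (\<epsilon> powr (- inv_exp p) * \<epsilon> powr inv_exp p)"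
          unfolding pe by (simp only: ac_simps)
        also have "\<epsilon> powr (- inv_exp p) * \<epsilon> powr inv_exp p = 1"
          using e by (simp add: powr_add[symmetric])
        finally show ?thesis unfolding C1_def by simp
      qed
      ultimately show ?thesis by simp
    qed
    have up: "Lnorm p {-1..1} g \<le> ereal C2"
    proof (cases "p = \<infinity>")
      case True
      have b0: "\<beta> \<ge> 0" using assms(4) True unfolding J_def by simp
      have ip0: "inv_exp p = 0" using True unfolding inv_exp_def by simp
      have gb: "g \<in> borel_measurable borel"
        unfolding g_def f_def wab_def pos_pow_def by measurable
      have gm: "g \<in> borel_measurable (lebesgue_on {-1..1})"
        by (intro measurable_restrict_space1 measurable_completion) (simp add: gb)
      have "Lnorm \<infinity> {-1..1} g \<le> ereal MA"
      proof (rule Lnorm_upper_inf[OF gm])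
        show "0 \<le> MA" using MA by simp
        fix x :: real assume x: "x \<in> {-1..1}"
        have pu: "\<bar>g x\<bar> \<le> (if x > 1 - \<epsilon> then MA * \<epsilon> powr (1 - real k - \<beta> - 0) * \<epsilon> ^ (k - 1) * (1 - x) powr \<beta> else 0)"
          using pointwise_upper[OF k e, where x=x and ip=0 and \<alpha>=\<alpha> and \<beta>=\<beta>] x unfolding g_def f_def lam_def ip0 MA_def by simp
        show "\<bar>g x\<bar> \<le> MA"
        proof (cases "x > 1 - \<epsilon>")
          case False then show ?thesis using pu MA by simp
        next
          case True
          have "(1 - x) powr \<beta> \<le> \<epsilon> powr \<beta>" using True x b0 by (intro powr_mono2) auto
          then have "MA * \<epsilon> powr (1 - real k - \<beta> - 0) * \<epsilon> ^ (k - 1) * (1 - x) powr \<beta>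
              \<le> MA * \<epsilon> powr (1 - real k - \<beta> - 0) * \<epsilon> ^ (k - 1) * \<epsilon> powr \<beta>"
            using MA e by (intro mult_left_mono) auto
          also have ek: "\<epsilon> ^ (k - 1) = \<epsilon> powr (real k - 1)" using e k by (simp add: powr_realpow[symmetric] of_nat_diff)
          also have "MA * \<epsilon> powr (1 - real k - \<beta> - 0) * \<epsilon> powr (real k - 1) * \<epsilon> powr \<beta> = MA"
            using e by (simp add: powr_add[symmetric])
          finally show ?thesis using pu True ek by simp
        qed
      qed
      then show ?thesis using True unfolding C2_def by simp
    next
      case False
      have R: "r > 0" "p = ereal r" "inv_exp p = 1 / r" "\<beta> * r > -1" using pfin[OF False] by auto
      define K0 where "K0 = MA * \<epsilon> powr (1 - real k - \<beta> - 1 / r) * \<epsilon> ^ (k - 1)"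
      have K0: "K0 \<ge> 0" unfolding K0_def using MA e by simp
      have K0': "K0 = MA * \<epsilon> powr (- (1 / r) - \<beta>)"
      proof -
        have "\<epsilon> ^ (k - 1) = \<epsilon> powr (real k - 1)" using e k by (simp add: powr_realpow[symmetric] of_nat_diff)
        then show ?thesis unfolding K0_def using e by (simp add: powr_add[symmetric] mult.assoc)
      qed
      define K where "K = K0 powr r"
      have KK: "K * \<epsilon> powr (\<beta> * r + 1) = MA powr r"
      proof -
        have "K = MA powr r * \<epsilon> powr ((- (1 / r) - \<beta>) * r)" unfolding K_def K0' using MA by (simp add: powr_mult powr_powr)
        also have "(- (1 / r) - \<beta>) * r = - (\<beta> * r + 1)" using R by (simp add: field_simps)
        moreover have "\<epsilon> powr (- (\<beta> * r) - 1) * \<epsilon> powr (\<beta> * r + 1) = 1"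
          using e by (simp add: powr_add[symmetric])
        ultimately show ?thesis by simp
      qed
      have "(\<integral>\<^sup>+ x. ennreal (\<bar>g x\<bar> powr real_of_ereal p) \<partial>lebesgue_on {-1..1})
          = (\<integral>\<^sup>+ x. ennreal (\<bar>g x\<bar> powr r) * indicator {-1..1} x \<partial>lebesgue)"
        unfolding r_def by (rule nn_integral_restrict_space) simp
      also have "\<dots> \<le> (\<integral>\<^sup>+ x. ennreal (K * (1 - x) powr (\<beta> * r)) * indicator {1 - \<epsilon>..1} x \<partial>lebesgue)"
      proof (rule nn_integral_mono)
        fix x :: real
        show "ennreal (\<bar>g x\<bar> powr r) * indicator {-1..1} x \<le> ennreal (K * (1 - x) powr (\<beta> * r)) * indicator {1 - \<epsilon>..1} x"
        proof (cases "x \<in> {-1..1}")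
          case False then show ?thesis by simp
        next
          case xin: True
          have pu: "\<bar>g x\<bar> \<le> (if x > 1 - \<epsilon> then K0 * (1 - x) powr \<beta> else 0)"
            using pointwise_upper[OF k e, where x=x and ip="1 / r" and \<alpha>=\<alpha> and \<beta>=\<beta>] xin unfolding g_def f_def lam_def R(3) MA_def K0_def by simp
          show ?thesis
          proof (cases "x > 1 - \<epsilon>")
            case False then show ?thesis using pu R by simp
          next
            case True
            have "\<bar>g x\<bar> powr r \<le> (K0 * (1 - x) powr \<beta>) powr r"
              using pu True R by (intro powr_mono2) auto
            also have "\<dots> = K * (1 - x) powr (\<beta> * r)" unfolding K_def by (simp add: powr_mult powr_powr)
            finally show ?thesis using True xin by (simp add: ennreal_leI)
          qed
        qed
      qed
      also have "\<dots> = ennreal (K * \<epsilon> powr (\<beta> * r + 1) / (\<beta> * r + 1))"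
        using nn_powr_integral_right[OF e(1), of "\<beta> * r" K] R unfolding K_def by simp
      also have "\<dots> = ennreal (MA powr r / (\<beta> * r + 1))" using KK by simp
      finally have I: "(\<integral>\<^sup>+ x. ennreal (\<bar>g x\<bar> powr real_of_ereal p) \<partial>lebesgue_on {-1..1}) \<le> ennreal (MA powr r / (\<beta> * r + 1))" .
      have "Lnorm p {-1..1} g \<le> ereal ((MA powr r / (\<beta> * r + 1)) powr (1 / real_of_ereal p))"
        using R MA by (intro Lnorm_upper_fin[OF False assms(2) _ I]) auto
      then show ?thesis using False unfolding C2_def r_def by simp
    qed
    have om: "omega_phi k f \<delta> (wab \<alpha> \<beta>) q \<ge> ereal (c * \<epsilon> powr (inv_exp q - inv_exp p))"
    proof -
      define h0 where "h0 = \<epsilon> / (2 * real k)"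
      have h0: "h0 > 0" "h0 \<le> \<epsilon> / 2" "real k * h0 = \<epsilon> / 2" unfolding h0_def using e kpos k
        by (auto simp: field_simps)
      have h0e: "h0 \<le> 2 * (real k)\<^sup>2 * \<delta>\<^sup>2" using h0 e ed by simp
      let ?S = "{1 - 2 * (real k)\<^sup>2 * \<delta>\<^sup>2 .. 1}"
      let ?L = "c' * \<epsilon> powr (- inv_exp p)"
      have bnd: "?L \<le> \<bar>wab \<alpha> \<beta> x * Delta_bwd k h0 f x\<bar>" if x: "x \<in> {1 - \<epsilon> + h0/2 .. 1 - \<epsilon> + h0}" for x
      proof -
        have "Delta_bwd k h0 f x = f x"
        proof (rule Delta_bwd_eq[OF k h0(1)])
          show "1 - \<epsilon> < x" "x \<le> 1 - \<epsilon> + h0" "x \<le> 1" using x h0 by auto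
          show "x - real k * h0 \<ge> -1" using x h0 e by auto
          fix y assume "y \<le> 1 - \<epsilon>" then show "f y = 0" unfolding f_def pos_pow_def by simp
        qed
        moreover have "min 1 (2 powr \<alpha>) * min ((1/2) powr \<beta>) 1 * (1 / (4 * real k)) ^ (k - 1) * \<epsilon> powr (- inv_exp p)
           \<le> \<bar>wab \<alpha> \<beta> x * (\<epsilon> powr (- real k - \<beta> - inv_exp p + 1) * pos_pow (x - 1 + \<epsilon>) (k - 1))\<bar>"
        proof (rule pointwise_lower[OF k e])
          show "0 < (1::real) / 2" "0 < 1 / (4 * real k)" using kpos by auto
          show "\<epsilon> * (1 / 2) \<le> 1 - x" "1 - x \<le> \<epsilon>" using x h0 by auto
          have "\<epsilon> * (1 / (4 * real k)) = h0 / 2" unfolding h0_def by simp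
          then show "\<epsilon> * (1 / (4 * real k)) \<le> x - 1 + \<epsilon>" using x by simp
        qed
        ultimately show ?thesis unfolding f_def lam_def c'_def mA_def by simp
      qed
      have "ereal (?L * ((1 - \<epsilon> + h0) - (1 - \<epsilon> + h0/2)) powr inv_exp q)
          \<le> Lnorm q ?S (\<lambda>x. wab \<alpha> \<beta> x * Delta_bwd k h0 f x)"
        using e c' h0 ed by (intro Lnorm_lower[OF assms(3)] bnd) auto
      also have "\<dots> \<le> Omega_right k f \<delta> (wab \<alpha> \<beta>) q"
        unfolding Omega_right_def using h0 h0e by (intro SUP_upper) auto
      also have "\<dots> \<le> omega_phi k f \<delta> (wab \<alpha> \<beta>) q"
      proof -
        have "Omega_main k f \<delta> (wab \<alpha> \<beta>) q \<ge> 0"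
          unfolding Omega_main_def using d by (intro SUP_upper2[where i = \<delta>]) (auto simp: Lnorm_nonneg)
        moreover have "Omega_left k f \<delta> (wab \<alpha> \<beta>) q \<ge> 0"
          unfolding Omega_left_def using d kpos by (intro SUP_upper2[where i = "2 * (real k)\<^sup>2 * \<delta>\<^sup>2"]) (auto simp: Lnorm_nonneg)
        ultimately show ?thesis unfolding omega_phi_def
          by (metis add_mono add.left_neutral order_refl)
      qed
      finally have *: "ereal (?L * ((1 - \<epsilon> + h0) - (1 - \<epsilon> + h0/2)) powr inv_exp q) \<le> omega_phi k f \<delta> (wab \<alpha> \<beta>) q" .
      have "?L * ((1 - \<epsilon> + h0) - (1 - \<epsilon> + h0/2)) powr inv_exp q = c * \<epsilon> powr (inv_exp q - inv_exp p)"
      proof -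
        have "(1 - \<epsilon> + h0) - (1 - \<epsilon> + h0/2) = \<epsilon> * (1 / (4 * real k))" unfolding h0_def by simp
        then have pe: "((1 - \<epsilon> + h0) - (1 - \<epsilon> + h0/2)) powr inv_exp q = \<epsilon> powr inv_exp q * (1 / (4 * real k)) powr inv_exp q"
          by (simp only: powr_mult)
        have "?L * ((1 - \<epsilon> + h0) - (1 - \<epsilon> + h0/2)) powr inv_exp q
            = c' * (1 / (4 * real k)) powr inv_exp q * (\<epsilon> powr (- inv_exp p) * \<epsilon> powr inv_exp q)"
          unfolding pe by (simp only: ac_simps)
        also have "\<epsilon> powr (- inv_exp p) * \<epsilon> powr inv_exp q = \<epsilon> powr (inv_exp q - inv_exp p)"
          using e by (simp add: powr_add[symmetric])
        finally show ?thesis unfolding c_def by simp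
      qed
      then show ?thesis using * by simp
    qed
    show "let lam = \<epsilon> powr (- real k - \<beta> - inv_exp p + 1);
                f = (\<lambda>x. lam * pos_pow (x - 1 + \<epsilon>) (k - 1))
            in f \<in> Mk k
               \<and> ereal C1 \<le> Lnorm p {-1..1} (\<lambda>x. wab \<alpha> \<beta> x * f x)
               \<and> Lnorm p {-1..1} (\<lambda>x. wab \<alpha> \<beta> x * f x) \<le> ereal C2
               \<and> omega_phi k f \<delta> (wab \<alpha> \<beta>) q \<ge> ereal (c * \<epsilon> powr (inv_exp q - inv_exp p))"
      using fMk[unfolded f_def] om[unfolded f_def] low[unfolded g_def f_def] up[unfolded g_def f_def]
      unfolding Let_def lam_def[symmetric] by simp
  qed
  show ?thesis using cpos C1pos C2pos main by blast
qed

end
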